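(* In the Jolteon protocol described in the context, if an honest replica successfully performs the Commit step on block $B$, then $B$ is globally direct-committed.
   Context: Jolteon protocol. There are $n=3f+1$ replicas, at most $f$ Byzantine, the rest honest; reliable authenticated channels; ideal threshold signatures in which $2f+1$ shares on the same message from distinct replicas combine into a threshold signature. A block is $B=(id,qc,tc,r,v,txn)$, with $qc$ a quorum certificate of its parent, $tc$ a timeout certificate or $\bot$, round $r$, view $v=0$, transactions $txn$, and $id$ a collision-resistant hash of the contents. A quorum certificate (QC) for $B$ is a threshold signature on $(B.id,B.r,B.v)$ from $2f+1$ shares (votes); $qc.r=B.r$; $B$ is certified if a QC for it exists; a genesis block of round $0$ has a QC. QCs are compared by round. A timeout message for round $r$ is a share on $r$ with the sender's $qc_{high}$; a timeout certificate (TC) for round $r$ is a threshold signature on $r$ from $2f+1$ timeout messages together with their $2f+1$ $qc_{high}$'s (all of round $<r$). Each round $r$ has a leader $L_r$ (round robin). Each replica keeps $r_{vote}=0$, $r_{cur}=1$, $qc_{high}$ = genesis QC. Propose: upon entering round $r$, $L_r$ multicasts $B=(id,qc_{high},tc,r,0,txn)$, with $tc$ the round-$(r-1)$ TC if $L_r$ entered round $r$ by receiving it, else $\bot$. Vote: upon the first valid proposal $B=(id,qc,tc,r,v,txn)$ from $L_r$, execute Advance Round, Lock, Commit; then if $r=r_{cur}$, $v=v_{cur}=0$, $r>r_{vote}$, and either $r=qc.r+1$ or ($r=tc.r+1$ and $qc.r\ge\max\{q.r: q$ a $qc_{high}$ in $tc\}$), send a share on $(id,r,v)$ to $L_{r+1}$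 and set $r_{vote}\gets r$. Lock: upon seeing a valid QC $qc$ (formed from votes or contained in a proposal, timeout message or TC), set $qc_{high}\gets\max(qc_{high},qc)$. Commit: whenever there are two certified blocks $B,B'$ with $B'.qc$ certifying $B$ and $B'.r=B.r+1$, commit $B$ and all its ancestors. Advance Round: set $r_{cur}\gets\max(r_{cur},r)$ upon receiving or forming a round-$(r-1)$ QC or TC. Timer: upon entering round $r$, send the round-$(r-1)$ TC to $L_r$ if held and reset a timer; on expiry stop voting in round $r_{cur}$ and multicast a timeout message; upon a valid timeout message or TC execute Advance Round, Lock, Commit; upon $2f+1$ timeout messages form a TC. Definition: a block $B$ is globally direct-committed if $f+1$ honest replicas each successfully perform the Vote step on a proposal of a block $B'$ in round $B.r+1$ such that $B'.qc$ certifies $B$ (these Vote calls invoke Lock, setting $qc_{high}\gets B'.qc$, and produce $f+1$ matching votes). *)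

theory Defs
  imports Main
begin

text \<open>Replicas are the naturals 0..n-1 with n = 3f+1.  Hashes (block ids) are naturals;
  the collision-resistant hash is a parameter H assumed injective.
  A quorum certificate is represented by the signed triple (id, r, v); it is valid iff it
  is the genesis QC or 2f+1 distinct replicas have produced a vote share on that triple
  (ideal threshold signatures).  A timeout certificate is represented by its round and
  the list of (signer, qc_high) pairs it was formed from.\<close>

datatype qc = QC (qc_id: nat) (qc_r: nat) (qc_v: nat)

datatype tc = TC (tc_r: nat) (tc_sigs: "(nat \<times> qc) list")

text \<open>A block (id, qc, tc, r, v, txn); its id is not stored but computed as H of the block.\<close>
datatype blk = Blk (b_qc: qc) (b_tc: "tc option") (b_r: nat) (b_v: nat) (b_txn: nat)

datatype msg =
    Propose nat blk                 \<comment> \<open>sender, block (multicast)\<close>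
  | Vote nat nat nat nat nat        \<comment> \<open>sender, recipient, share on (id, r, v)\<close>
  | Timeout nat nat qc              \<comment> \<open>sender, round, sender's qc_high (multicast)\<close>
  | TCMsg nat nat tc                \<comment> \<open>sender, recipient, TC\<close>

fun msg_sender :: "msg \<Rightarrow> nat" where
  "msg_sender (Propose j _) = j"
| "msg_sender (Vote j _ _ _ _) = j"
| "msg_sender (Timeout j _ _) = j"
| "msg_sender (TCMsg j _ _) = j"

datatype ev =
    VoteEv nat blk     \<comment> \<open>replica successfully performed the Vote step on a proposal of the block\<close>
  | CommitEv nat blk   \<comment> \<open>replica successfully performed the Commit step on the block\<close>

definition nrep :: "nat \<Rightarrow> nat" where "nrep f = 3 * f + 1"

definition leader :: "nat \<Rightarrow> nat \<Rightarrow> nat" where "leader f r = r mod nrep f"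

definition honest :: "nat \<Rightarrow> nat set \<Rightarrow> nat \<Rightarrow> bool" where
  "honest f F i \<longleftrightarrow> i < nrep f \<and> i \<notin> F"

definition genesis_blk :: blk where "genesis_blk = Blk (QC 0 0 0) None 0 0 0"

definition gqc :: "(blk \<Rightarrow> nat) \<Rightarrow> qc" where "gqc H = QC (H genesis_blk) 0 0"

definition valid_qc :: "nat \<Rightarrow> (blk \<Rightarrow> nat) \<Rightarrow> msg set \<Rightarrow> qc \<Rightarrow> bool" where
  "valid_qc f H N q \<longleftrightarrow> q = gqc H \<or>
     card {j. j < nrep f \<and> (\<exists>k. Vote j k (qc_id q) (qc_r q) (qc_v q) \<in> N)} \<ge> 2 * f + 1"

definition valid_tc :: "nat \<Rightarrow> (blk \<Rightarrow> nat) \<Rightarrow> msg set \<Rightarrow> tc \<Rightarrow> bool" where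
  "valid_tc f H N t \<longleftrightarrow> distinct (map fst (tc_sigs t)) \<and> length (tc_sigs t) = 2 * f + 1 \<and>
     (\<forall>(j, q) \<in> set (tc_sigs t). j < nrep f \<and> Timeout j (tc_r t) q \<in> N \<and>
        valid_qc f H N q \<and> qc_r q < tc_r t)"

definition valid_block :: "nat \<Rightarrow> (blk \<Rightarrow> nat) \<Rightarrow> msg set \<Rightarrow> blk \<Rightarrow> bool" where
  "valid_block f H N B \<longleftrightarrow> valid_qc f H N (b_qc B) \<and>
     (case b_tc B of None \<Rightarrow> True | Some t \<Rightarrow> valid_tc f H N t)"

record lstate =
  r_vote :: nat
  r_cur :: nat
  qc_high :: qc
  handled :: "nat set"       \<comment> \<open>rounds for which a valid proposal was already processed\<close>
  timed_out :: "nat set"     \<comment> \<open>rounds in which the timer expired (voting stopped)\<close>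
  proposed :: "nat set"
  held_tc :: "nat \<Rightarrow> tc option"
  entry_tc :: "nat \<Rightarrow> tc option"  \<comment> \<open>the round-(r-1) TC by which round r was entered\<close>

record gstate =
  loc :: "nat \<Rightarrow> lstate"
  net :: "msg set"        \<comment> \<open>all messages sent so far\<close>
  evlog :: "ev set"

definition init_lstate :: "(blk \<Rightarrow> nat) \<Rightarrow> lstate" where
  "init_lstate H = \<lparr>r_vote = 0, r_cur = 1, qc_high = gqc H, handled = {}, timed_out = {},
     proposed = {}, held_tc = (\<lambda>_. None), entry_tc = (\<lambda>_. None)\<rparr>"

definition init_state :: "(blk \<Rightarrow> nat) \<Rightarrow> gstate" where
  "init_state H = \<lparr>loc = (\<lambda>_. init_lstate H), net = {}, evlog = {}\<rparr>"

text \<open>Lock and Advance Round upon seeing a QC.\<close>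
definition lock :: "lstate \<Rightarrow> qc \<Rightarrow> lstate" where
  "lock ls q = ls\<lparr>qc_high := (if qc_r (qc_high ls) < qc_r q then q else qc_high ls)\<rparr>"

definition see_qc :: "lstate \<Rightarrow> qc \<Rightarrow> lstate" where
  "see_qc ls q = (let l = lock ls q in l\<lparr>r_cur := max (r_cur l) (Suc (qc_r q))\<rparr>)"

text \<open>Lock / Advance Round upon seeing a TC (including the QCs it contains).\<close>
definition see_tc :: "lstate \<Rightarrow> tc \<Rightarrow> lstate" where
  "see_tc ls t = (let l1 = fold (\<lambda>(j, q) l. see_qc l q) (tc_sigs t) ls;
                      l2 = l1\<lparr>held_tc := (held_tc l1)(tc_r t := Some t)\<rparr>
                  in if r_cur l2 < Suc (tc_r t)
                     then l2\<lparr>r_cur := Suc (tc_r t), entry_tc := (entry_tc l2)(Suc (tc_r t) := Some t)\<rparr>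
                     else l2)"

text \<open>Voting rule, evaluated after Advance Round and Lock.\<close>
definition vote_ok :: "lstate \<Rightarrow> blk \<Rightarrow> bool" where
  "vote_ok ls B \<longleftrightarrow> b_r B = r_cur ls \<and> b_v B = 0 \<and> b_r B > r_vote ls \<and> b_r B \<notin> timed_out ls \<and>
     (b_r B = Suc (qc_r (b_qc B)) \<or>
      (\<exists>t. b_tc B = Some t \<and> b_r B = Suc (tc_r t) \<and>
           (\<forall>(j, q) \<in> set (tc_sigs t). qc_r q \<le> qc_r (b_qc B))))"

definition after_proposal :: "lstate \<Rightarrow> blk \<Rightarrow> lstate" where
  "after_proposal ls B = (let l1 = see_qc ls (b_qc B);
                              l2 = (case b_tc B of None \<Rightarrow> l1 | Some t \<Rightarrow> see_tc l1 t)
                          in l2)"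

inductive step :: "nat \<Rightarrow> (blk \<Rightarrow> nat) \<Rightarrow> nat set \<Rightarrow> gstate \<Rightarrow> gstate \<Rightarrow> bool"
  for f :: nat and H :: "blk \<Rightarrow> nat" and F :: "nat set" where
  propose: "\<lbrakk> honest f F i; ls = loc s i; i = leader f (r_cur ls); r_cur ls \<notin> proposed ls \<rbrakk> \<Longrightarrow>
    step f H F s (s\<lparr>loc := (loc s)(i := ls\<lparr>proposed := insert (r_cur ls) (proposed ls)\<rparr>),
                   net := insert (Propose i (Blk (qc_high ls) (entry_tc ls (r_cur ls)) (r_cur ls) 0 txn)) (net s)\<rparr>)"
| recv_proposal: "\<lbrakk> honest f F i; ls = loc s i; Propose j B \<in> net s; j = leader f (b_r B);
      valid_block f H (net s) B; b_r B \<notin> handled ls;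
      l2 = after_proposal ls B; l3 = l2\<lparr>handled := insert (b_r B) (handled l2)\<rparr> \<rbrakk> \<Longrightarrow>
    step f H F s (if vote_ok l2 B
       then s\<lparr>loc := (loc s)(i := l3\<lparr>r_vote := b_r B\<rparr>),
              net := insert (Vote i (leader f (Suc (b_r B))) (H B) (b_r B) (b_v B)) (net s),
              evlog := insert (VoteEv i B) (evlog s)\<rparr>
       else s\<lparr>loc := (loc s)(i := l3)\<rparr>)"
| commit: "\<lbrakk> honest f F i; valid_qc f H (net s) (QC (H B') (b_r B') (b_v B'));
      valid_qc f H (net s) (b_qc B'); b_qc B' = QC (H B) (b_r B) (b_v B); b_r B' = Suc (b_r B) \<rbrakk> \<Longrightarrow>
    step f H F s (s\<lparr>evlog := insert (CommitEv i B) (evlog s)\<rparr>)"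
  \<comment> \<open>Timer expiry: stop voting in the current round and multicast a timeout message\<close>
| expire: "\<lbrakk> honest f F i; ls = loc s i; r_cur ls \<notin> timed_out ls \<rbrakk> \<Longrightarrow>
    step f H F s (s\<lparr>loc := (loc s)(i := ls\<lparr>timed_out := insert (r_cur ls) (timed_out ls)\<rparr>),
                   net := insert (Timeout i (r_cur ls) (qc_high ls)) (net s)\<rparr>)"
| recv_timeout: "\<lbrakk> honest f F i; Timeout j r q \<in> net s; valid_qc f H (net s) q; qc_r q < r \<rbrakk> \<Longrightarrow>
    step f H F s (s\<lparr>loc := (loc s)(i := see_qc (loc s i) q)\<rparr>)"
| form_tc: "\<lbrakk> honest f F i; valid_tc f H (net s) t \<rbrakk> \<Longrightarrow>
    step f H F s (s\<lparr>loc := (loc s)(i := see_tc (loc s i) t)\<rparr>)"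
| recv_tc: "\<lbrakk> honest f F i; TCMsg j i t \<in> net s; valid_tc f H (net s) t \<rbrakk> \<Longrightarrow>
    step f H F s (s\<lparr>loc := (loc s)(i := see_tc (loc s i) t)\<rparr>)"
| send_tc: "\<lbrakk> honest f F i; ls = loc s i; held_tc ls (r_cur ls - 1) = Some t \<rbrakk> \<Longrightarrow>
    step f H F s (s\<lparr>net := insert (TCMsg i (leader f (r_cur ls)) t) (net s)\<rparr>)"
| form_qc: "\<lbrakk> honest f F i; card {j. j < nrep f \<and> Vote j i d r v \<in> net s} \<ge> 2 * f + 1 \<rbrakk> \<Longrightarrow>
    step f H F s (s\<lparr>loc := (loc s)(i := see_qc (loc s i) (QC d r v))\<rparr>)"
  \<comment> \<open>Byzantine replicas send arbitrary messages under their own identity\<close>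
| byz: "\<lbrakk> j \<in> F; msg_sender m = j \<rbrakk> \<Longrightarrow>
    step f H F s (s\<lparr>net := insert m (net s)\<rparr>)"

definition reachable :: "nat \<Rightarrow> (blk \<Rightarrow> nat) \<Rightarrow> nat set \<Rightarrow> gstate \<Rightarrow> bool" where
  "reachable f H F s \<longleftrightarrow> (step f H F)\<^sup>*\<^sup>* (init_state H) s"

definition globally_direct_committed :: "nat \<Rightarrow> (blk \<Rightarrow> nat) \<Rightarrow> nat set \<Rightarrow> gstate \<Rightarrow> blk \<Rightarrow> bool" where
  "globally_direct_committed f H F s B \<longleftrightarrow>
     (\<exists>B'. b_r B' = Suc (b_r B) \<and> b_qc B' = QC (H B) (b_r B) (b_v B) \<and>
        card {j. honest f F j \<and> VoteEv j B' \<in> evlog s} \<ge> f + 1)"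

end

theory Submission
  imports Defs
begin

lemma valid_qc_mono:
  assumes "N \<subseteq> N'" "valid_qc f H N q" shows "valid_qc f H N' q"
proof -
  have "card {j. j < nrep f \<and> (\<exists>k. Vote j k (qc_id q) (qc_r q) (qc_v q) \<in> N)}
     \<le> card {j. j < nrep f \<and> (\<exists>k. Vote j k (qc_id q) (qc_r q) (qc_v q) \<in> N')}"
    by (rule card_mono) (use assms(1) in auto)
  then show ?thesis using assms(2) unfolding valid_qc_def by linarith
qed

definition invNE :: "nat \<Rightarrow> (blk \<Rightarrow> nat) \<Rightarrow> nat set \<Rightarrow> msg set \<Rightarrow> ev set \<Rightarrow> bool" where
  "invNE f H F N E \<longleftrightarrow>
    (\<forall>j k d r v. honest f F j \<and> Vote j k d r v \<in> N \<longrightarrow> (\<exists>B0. H B0 = d \<and> VoteEv j B0 \<in> E)) \<and>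
    (\<forall>i B. CommitEv i B \<in> E \<longrightarrow> (\<exists>B'. b_r B' = Suc (b_r B) \<and> b_qc B' = QC (H B) (b_r B) (b_v B) \<and>
        valid_qc f H N (QC (H B') (b_r B') (b_v B'))))"

lemma invNE_msg:
  assumes "invNE f H F N E" "\<And>j k d r v. m = Vote j k d r v \<Longrightarrow> \<not> honest f F j"
  shows "invNE f H F (insert m N) E"
  unfolding invNE_def
proof (intro conjI allI impI)
  fix j k d r v
  assume "honest f F j \<and> Vote j k d r v \<in> insert m N"
  hence "honest f F j" "Vote j k d r v \<in> N" using assms(2) by auto
  thus "\<exists>B0. H B0 = d \<and> VoteEv j B0 \<in> E"
    using assms(1) unfolding invNE_def by blast
next
  fix i B assume "CommitEv i B \<in> E"
  then obtain B' where "b_r B' = Suc (b_r B)" "b_qc B' = QC (H B) (b_r B) (b_v B)"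
    "valid_qc f H N (QC (H B') (b_r B') (b_v B'))"
    using assms(1) unfolding invNE_def by blast
  moreover have "valid_qc f H (insert m N) (QC (H B') (b_r B') (b_v B'))"
    by (rule valid_qc_mono[OF _ calculation(3)]) auto
  ultimately show "\<exists>B'. b_r B' = Suc (b_r B) \<and> b_qc B' = QC (H B) (b_r B) (b_v B) \<and>
        valid_qc f H (insert m N) (QC (H B') (b_r B') (b_v B'))"
    by blast
qed

lemma invNE_vote:
  assumes "invNE f H F N E"
  shows "invNE f H F (insert (Vote i k (H B) r v) N) (insert (VoteEv i B) E)"
  unfolding invNE_def
proof (intro conjI allI impI)
  fix j k' d r' v'
  assume a: "honest f F j \<and> Vote j k' d r' v' \<in> insert (Vote i k (H B) r v) N"
  show "\<exists>B0. H B0 = d \<and> VoteEv j B0 \<in> insert (VoteEv i B) E"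
  proof (cases "Vote j k' d r' v' = Vote i k (H B) r v")
    case True thus ?thesis by auto
  next
    case False
    hence "honest f F j" "Vote j k' d r' v' \<in> N" using a by auto
    then obtain B0 where "H B0 = d" "VoteEv j B0 \<in> E" using assms unfolding invNE_def by blast
    thus ?thesis by blast
  qed
next
  fix i' B1 assume "CommitEv i' B1 \<in> insert (VoteEv i B) E"
  hence "CommitEv i' B1 \<in> E" by simp
  then obtain B' where "b_r B' = Suc (b_r B1)" "b_qc B' = QC (H B1) (b_r B1) (b_v B1)"
    "valid_qc f H N (QC (H B') (b_r B') (b_v B'))"
    using assms unfolding invNE_def by blast
  moreover have "valid_qc f H (insert (Vote i k (H B) r v) N) (QC (H B') (b_r B') (b_v B'))"
    by (rule valid_qc_mono[OF _ calculation(3)]) auto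
  ultimately show "\<exists>B'. b_r B' = Suc (b_r B1) \<and> b_qc B' = QC (H B1) (b_r B1) (b_v B1) \<and>
        valid_qc f H (insert (Vote i k (H B) r v) N) (QC (H B') (b_r B') (b_v B'))"
    by blast
qed

lemma invNE_commit:
  assumes "invNE f H F N E" "valid_qc f H N (QC (H B') (b_r B') (b_v B'))"
    "b_qc B' = QC (H B) (b_r B) (b_v B)" "b_r B' = Suc (b_r B)"
  shows "invNE f H F N (insert (CommitEv i B) E)"
  unfolding invNE_def
proof (intro conjI allI impI)
  fix j k d r v
  assume "honest f F j \<and> Vote j k d r v \<in> N"
  then obtain B0 where "H B0 = d" "VoteEv j B0 \<in> E" using assms(1) unfolding invNE_def by blast
  thus "\<exists>B0. H B0 = d \<and> VoteEv j B0 \<in> insert (CommitEv i B) E" by blast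
next
  fix i' B1 assume c: "CommitEv i' B1 \<in> insert (CommitEv i B) E"
  show "\<exists>B'. b_r B' = Suc (b_r B1) \<and> b_qc B' = QC (H B1) (b_r B1) (b_v B1) \<and>
        valid_qc f H N (QC (H B') (b_r B') (b_v B'))"
  proof (cases "B1 = B")
    case True thus ?thesis using assms(2-4) by blast
  next
    case False
    hence "CommitEv i' B1 \<in> E" using c by simp
    thus ?thesis using assms(1) unfolding invNE_def by blast
  qed
qed

lemma inv_step:
  assumes "step f H F s s'" "invNE f H F (net s) (evlog s)" shows "invNE f H F (net s') (evlog s')"
  using assms
proof (induction rule: step.induct)
  case (propose i ls s txn)
  have "invNE f H F (insert (Propose i (Blk (qc_high ls) (entry_tc ls (r_cur ls)) (r_cur ls) 0 txn)) (net s)) (evlog s)" by (rule invNE_msg[OF propose.prems]) simp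
  thus ?case by simp
next
  case (recv_proposal i ls s j B l2 l3)
  show ?case
  proof (cases "vote_ok l2 B")
    case True
    thus ?thesis using invNE_vote[OF recv_proposal.prems] by simp
  next
    case False
    thus ?thesis using recv_proposal.prems by simp
  qed
next
  case (commit i B' s B)
  show ?case using invNE_commit[OF commit.prems commit.hyps(2,4,5)] by simp
next
  case (expire i ls s)
  have "invNE f H F (insert (Timeout i (r_cur ls) (qc_high ls)) (net s)) (evlog s)" by (rule invNE_msg[OF expire.prems]) simp
  thus ?case by simp
next
  case (recv_timeout i j r q s)
  show ?case using recv_timeout.prems by simp
next
  case (form_tc i t s)
  show ?case using form_tc.prems by simp
next
  case (recv_tc i j t s)
  show ?case using recv_tc.prems by simp
next
  case (send_tc i ls s t)
  have "invNE f H F (insert (TCMsg i (leader f (r_cur ls)) t) (net s)) (evlog s)" by (rule invNE_msg[OF send_tc.prems]) simp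
  thus ?case by simp
next
  case (form_qc i d r v s)
  show ?case using form_qc.prems by simp
next
  case (byz j m s)
  have "invNE f H F (insert m (net s)) (evlog s)"
    by (rule invNE_msg[OF byz.prems]) (use byz.hyps in \<open>auto simp: honest_def\<close>)
  thus ?case by simp
qed

lemma inv_reach: "reachable f H F s \<Longrightarrow> invNE f H F (net s) (evlog s)"
  unfolding reachable_def
proof (induction rule: rtranclp_induct)
  case base thus ?case by (simp add: invNE_def init_state_def)
next
  case (step y z) thus ?case using inv_step by blast
qed

theorem lemma1:
  fixes f :: nat and H :: "blk \<Rightarrow> nat" and F :: "nat set" and s :: gstate
    and i :: nat and B :: blk
  assumes "inj H"
    and "F \<subseteq> {..<nrep f}" and "card F \<le> f"
    and "reachable f H F s"
    and "honest f F i"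
    and "CommitEv i B \<in> evlog s"
  shows "globally_direct_committed f H F s B"
proof -
  have I: "invNE f H F (net s) (evlog s)" using assms(4) by (rule inv_reach)
  then obtain B' where B': "b_r B' = Suc (b_r B)" "b_qc B' = QC (H B) (b_r B) (b_v B)"
    "valid_qc f H (net s) (QC (H B') (b_r B') (b_v B'))"
    using assms(6) unfolding invNE_def by blast
  define S where "S = {j. j < nrep f \<and> (\<exists>k. Vote j k (H B') (b_r B') (b_v B') \<in> net s)}"
  have "QC (H B') (b_r B') (b_v B') \<noteq> gqc H" using B'(1) by (simp add: gqc_def)
  hence cS: "card S \<ge> 2 * f + 1" using B'(3) unfolding valid_qc_def S_def by simp
  have fF: "finite F" using assms(2) finite_subset by blast
  have "card S - card F \<le> card (S - F)"
    by (rule diff_card_le_card_Diff[OF fF])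
  hence c1: "card (S - F) \<ge> f + 1" using cS assms(3) by linarith
  have sub: "S - F \<subseteq> {j. honest f F j \<and> VoteEv j B' \<in> evlog s}"
  proof
    fix j assume "j \<in> S - F"
    then obtain k where j: "j < nrep f" "j \<notin> F" "Vote j k (H B') (b_r B') (b_v B') \<in> net s"
      unfolding S_def by blast
    hence h: "honest f F j" by (simp add: honest_def)
    then obtain B0 where "H B0 = H B'" "VoteEv j B0 \<in> evlog s"
      using I j(3) unfolding invNE_def by blast
    with assms(1) have "VoteEv j B' \<in> evlog s" by (metis injD)
    with h show "j \<in> {j. honest f F j \<and> VoteEv j B' \<in> evlog s}" by simp
  qed
  have "finite {j. honest f F j \<and> VoteEv j B' \<in> evlog s}"
    by (rule finite_subset[of _ "{..<nrep f}"]) (auto simp: honest_def)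
  hence "card (S - F) \<le> card {j. honest f F j \<and> VoteEv j B' \<in> evlog s}"
    using sub card_mono by blast
  with c1 have "card {j. honest f F j \<and> VoteEv j B' \<in> evlog s} \<ge> f + 1" by linarith
  with B'(1,2) show ?thesis unfolding globally_direct_committed_def by blast
qed

end
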